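(* Let $\mathscr J,\mathcal K\subseteq\{1,\dots,n\}$, let $\Delta$ be the simplicial complex with facets $\mathscr J$ and $\mathcal K$, and let $i\in\mathscr J\cap\mathcal K$. Then $$L_{\mathcal K\setminus\{i\}}\cdot L_{\mathscr J}\subseteq P_\Delta R+L_{\mathscr J\setminus\{i\}}.$$
   Context: $\mathbb K$ is a field, $R=\mathbb K[x_{i_1,\dots,i_n}:1\le i_j\le a_j]$. For a tuple $\sigma$ with $\sigma_j\in\{1,\dots,a_j\}\cup\{+\}$, $x_\sigma$ is the sum of all $x_{i_1,\dots,i_n}$ with $i_j=\sigma_j$ whenever $\sigma_j\ne+$. For $\mathscr J\subseteq\{1,\dots,n\}$, $L_{\mathscr J}$ is the ideal of $R$ generated by all $x_\sigma$ with $\sigma_j\in\{1,\dots,a_j\}$ for $j\in\mathscr J$ and $\sigma_j=+$ for $j\notin\mathscr J$ (the entries of the $\mathscr J$-margin of the generic table). $S_\Delta$ is the polynomial ring over $\mathbb K$ in variables $X_\sigma$ for tuples $\sigma$ with $\sigma_j\in\{1,\dots,a_j\}\cup\{\bullet\}$ and $\{j:\sigma_j\ne\bullet\}\in\Delta$. $\tau_\Delta:S_\Delta\to R$ sends $X_\sigma\mapsto x_{\sigma''}$ ($\bullet$ replaced by $+$). $\sigma_\Delta:S_\Delta\to\mathbb K[y_{j,i}:1\le j\le n,1\le i\le a_j]$ sends $X_\sigma\mapsto\prod_jy_{j,\sigma_j}$ with $y_{j,\bullet}$ read as $\sum_iy_{j,i}$; $P_\Delta=\ker\sigma_\Delta$,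 and $P_\Delta R$ is the ideal of $R$ generated by $\tau_\Delta(P_\Delta)$. *)

theory Defs
  imports "HOL-Library.Poly_Mapping"
begin

text \<open>Multivariate polynomials over a coefficient ring with variables of type 'v are
  represented as finitely supported maps from monomials (exponent vectors 'v =>0 nat)
  to coefficients.\<close>

type_synonym ('v, 'k) mpoly = "('v \<Rightarrow>\<^sub>0 nat) \<Rightarrow>\<^sub>0 'k"

definition PVar :: "'v \<Rightarrow> ('v, 'k::comm_ring_1) mpoly" where
  "PVar v = Poly_Mapping.single (Poly_Mapping.single v 1) 1"

definition PConst :: "'k \<Rightarrow> ('v, 'k::comm_ring_1) mpoly" where
  "PConst c = Poly_Mapping.single 0 c"

definition pvars :: "('v, 'k::comm_ring_1) mpoly \<Rightarrow> 'v set" where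
  "pvars p = \<Union> (Poly_Mapping.keys ` Poly_Mapping.keys p)"

definition psubst :: "('v \<Rightarrow> ('w, 'k::comm_ring_1) mpoly) \<Rightarrow> ('v, 'k) mpoly \<Rightarrow> ('w, 'k) mpoly" where
  "psubst f p = (\<Sum>m\<in>Poly_Mapping.keys p.
      PConst (Poly_Mapping.lookup p m) * (\<Prod>v\<in>Poly_Mapping.keys m. f v ^ Poly_Mapping.lookup m v))"

definition ideal_gen :: "'a::comm_ring_1 set \<Rightarrow> 'a set" where
  "ideal_gen S = {(\<Sum>s\<in>F. c s * s) | F c. finite F \<and> F \<subseteq> S}"

definition ideal_sum :: "'a::comm_ring_1 set \<Rightarrow> 'a set \<Rightarrow> 'a set" where
  "ideal_sum I J = ideal_gen (I \<union> J)"

definition ideal_prod :: "'a::comm_ring_1 set \<Rightarrow> 'a set \<Rightarrow> 'a set" where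
  "ideal_prod I J = ideal_gen {x * y | x y. x \<in> I \<and> y \<in> J}"

text \<open>A margin index sigma is a function nat => nat with sigma j in {0..a j} for j in {1..n}
  and sigma j = 0 otherwise; the value 0 encodes the symbol + (resp. bullet).\<close>

definition cells :: "nat \<Rightarrow> (nat \<Rightarrow> nat) \<Rightarrow> (nat \<Rightarrow> nat) set" where
  "cells n a = {c. (\<forall>j\<in>{1..n}. 1 \<le> c j \<and> c j \<le> a j) \<and> (\<forall>j. j \<notin> {1..n} \<longrightarrow> c j = 0)}"

definition margin_idx :: "nat \<Rightarrow> (nat \<Rightarrow> nat) \<Rightarrow> (nat \<Rightarrow> nat) set" where
  "margin_idx n a = {s. (\<forall>j\<in>{1..n}. s j \<le> a j) \<and> (\<forall>j. j \<notin> {1..n} \<longrightarrow> s j = 0)}"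

definition msupp :: "nat \<Rightarrow> (nat \<Rightarrow> nat) \<Rightarrow> nat set" where
  "msupp n s = {j\<in>{1..n}. s j \<noteq> 0}"

definition xsig :: "nat \<Rightarrow> (nat \<Rightarrow> nat) \<Rightarrow> (nat \<Rightarrow> nat) \<Rightarrow> (nat \<Rightarrow> nat, 'k::comm_ring_1) mpoly" where
  "xsig n a s = (\<Sum>c\<in>{c\<in>cells n a. \<forall>j\<in>{1..n}. s j \<noteq> 0 \<longrightarrow> c j = s j}. PVar c)"

definition Lmarg :: "nat \<Rightarrow> (nat \<Rightarrow> nat) \<Rightarrow> nat set \<Rightarrow> (nat \<Rightarrow> nat, 'k::comm_ring_1) mpoly set" where
  "Lmarg n a J = ideal_gen (xsig n a ` {s\<in>margin_idx n a. msupp n s = J \<inter> {1..n} \<and> (\<forall>j\<in>J \<inter> {1..n}. 1 \<le> s j)})"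

definition Svars :: "nat \<Rightarrow> (nat \<Rightarrow> nat) \<Rightarrow> nat set set \<Rightarrow> (nat \<Rightarrow> nat) set" where
  "Svars n a Delta = {s\<in>margin_idx n a. msupp n s \<in> Delta}"

definition tauD :: "nat \<Rightarrow> (nat \<Rightarrow> nat) \<Rightarrow> (nat \<Rightarrow> nat, 'k::comm_ring_1) mpoly \<Rightarrow> (nat \<Rightarrow> nat, 'k) mpoly" where
  "tauD n a = psubst (xsig n a)"

definition yvar :: "(nat \<Rightarrow> nat) \<Rightarrow> nat \<Rightarrow> nat \<Rightarrow> (nat \<times> nat, 'k::comm_ring_1) mpoly" where
  "yvar a j i = (if i = 0 then (\<Sum>i'\<in>{1..a j}. PVar (j, i')) else PVar (j, i))"

definition sigD :: "nat \<Rightarrow> (nat \<Rightarrow> nat) \<Rightarrow> (nat \<Rightarrow> nat, 'k::comm_ring_1) mpoly \<Rightarrow> (nat \<times> nat, 'k) mpoly" where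
  "sigD n a = psubst (\<lambda>s. \<Prod>j\<in>{1..n}. yvar a j (s j))"

definition PDelta :: "nat \<Rightarrow> (nat \<Rightarrow> nat) \<Rightarrow> nat set set \<Rightarrow> (nat \<Rightarrow> nat, 'k::comm_ring_1) mpoly set" where
  "PDelta n a Delta = {p. pvars p \<subseteq> Svars n a Delta \<and> sigD n a p = 0}"

definition PDeltaR :: "nat \<Rightarrow> (nat \<Rightarrow> nat) \<Rightarrow> nat set set \<Rightarrow> (nat \<Rightarrow> nat, 'k::comm_ring_1) mpoly set" where
  "PDeltaR n a Delta = ideal_gen (tauD n a ` PDelta n a Delta)"

definition complex2 :: "nat set \<Rightarrow> nat set \<Rightarrow> nat set set" where
  "complex2 J K = {F. F \<subseteq> J \<or> F \<subseteq> K}"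

end

theory Submission imports Defs begin
definition mon :: "('v \<Rightarrow> ('w, 'k::comm_ring_1) mpoly) \<Rightarrow> ('v \<Rightarrow>\<^sub>0 nat) \<Rightarrow> ('w, 'k) mpoly" where
  "mon f m = (\<Prod>v\<in>Poly_Mapping.keys m. f v ^ Poly_Mapping.lookup m v)"

lemma mon_superset:
  assumes "finite S" "Poly_Mapping.keys m \<subseteq> S"
  shows "mon f m = (\<Prod>v\<in>S. f v ^ Poly_Mapping.lookup m v)"
  unfolding mon_def
  by (rule prod.mono_neutral_left) (use assms in \<open>auto simp: in_keys_iff\<close>)

lemma mon_add: "mon f (m1 + m2) = mon f m1 * mon f m2"
proof -
  let ?S = "Poly_Mapping.keys m1 \<union> Poly_Mapping.keys m2"
  have "mon f (m1 + m2) = (\<Prod>v\<in>?S. f v ^ Poly_Mapping.lookup (m1 + m2) v)"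
    by (rule mon_superset) (auto dest: keys_add[THEN subsetD])
  also have "\<dots> = (\<Prod>v\<in>?S. f v ^ Poly_Mapping.lookup m1 v * f v ^ Poly_Mapping.lookup m2 v)"
    by (simp add: lookup_add power_add)
  also have "\<dots> = mon f m1 * mon f m2"
    by (simp add: prod.distrib mon_superset[of ?S])
  finally show ?thesis .
qed

lemma mon_single1: "mon f (Poly_Mapping.single v 1) = f v"
  by (simp add: mon_def)

lemma mon_single1': "mon f (Poly_Mapping.single v (Suc 0)) = f v"
  by (simp add: mon_def)

lemma PConst_0: "PConst 0 = 0" by (simp add: PConst_def)
lemma PConst_1: "PConst 1 = 1" by (simp add: PConst_def)

lemma psubst_superset:
  assumes "finite S" "Poly_Mapping.keys p \<subseteq> S"
  shows "psubst f p = (\<Sum>m\<in>S. PConst (Poly_Mapping.lookup p m) * mon f m)"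
  unfolding psubst_def mon_def[symmetric]
  by (rule sum.mono_neutral_left) (use assms in \<open>auto simp: in_keys_iff PConst_0\<close>)

lemma psubst_diff: "psubst f (p - q) = psubst f p - psubst f q"
proof -
  let ?S = "Poly_Mapping.keys p \<union> Poly_Mapping.keys q"
  have "psubst f (p - q) = (\<Sum>m\<in>?S. PConst (Poly_Mapping.lookup (p - q) m) * mon f m)"
    by (rule psubst_superset) (auto dest: keys_diff[THEN subsetD])
  also have "\<dots> = (\<Sum>m\<in>?S. PConst (Poly_Mapping.lookup p m) * mon f m - PConst (Poly_Mapping.lookup q m) * mon f m)"
    by (simp add: lookup_minus PConst_def single_diff algebra_simps)
  also have "\<dots> = psubst f p - psubst f q"
    by (simp add: sum_subtractf psubst_superset[of ?S])
  finally show ?thesis .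
qed

lemma psubst_PVar2:
  "psubst f (PVar a * PVar b :: ('v, 'k::field) mpoly) = f a * f b"
proof -
  have "PVar a * PVar b = (Poly_Mapping.single (Poly_Mapping.single a 1 + Poly_Mapping.single b 1) 1 :: ('v, 'k) mpoly)"
    by (simp add: PVar_def mult_single)
  then show ?thesis
    by (simp add: psubst_def mon_def[symmetric] PConst_1 mon_add mon_single1 mon_single1')
qed

lemma pvars_PVar2: "pvars (PVar a * PVar b :: ('v, 'k::field) mpoly) = {a, b}"
proof -
  have "PVar a * PVar b = (Poly_Mapping.single (Poly_Mapping.single a 1 + Poly_Mapping.single b 1) 1 :: ('v, 'k) mpoly)"
    by (simp add: PVar_def mult_single)
  moreover have "Poly_Mapping.keys (Poly_Mapping.single a (1::nat) + Poly_Mapping.single b 1) = {a, b}"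
    by (auto simp: in_keys_iff lookup_add lookup_single when_def split: if_splits)
  ultimately show ?thesis by (simp add: pvars_def)
qed

lemma pvars_diff: "pvars (p - q) \<subseteq> pvars p \<union> pvars q"
  unfolding pvars_def using keys_diff[of p q] by auto

lemma ideal_gen_0: "0 \<in> ideal_gen S"
  unfolding ideal_gen_def by (rule CollectI, rule exI[of _ "{}"]) auto

lemma ideal_gen_base: "x \<in> S \<Longrightarrow> x \<in> ideal_gen S"
  unfolding ideal_gen_def by (rule CollectI, rule exI[of _ "{x}"], rule exI[of _ "\<lambda>_. 1"]) auto

lemma ideal_gen_mult: "x \<in> ideal_gen S \<Longrightarrow> c * x \<in> ideal_gen S"
proof -
  assume "x \<in> ideal_gen S"
  then obtain F d where F: "finite F" "F \<subseteq> S" "x = (\<Sum>s\<in>F. d s * s)" unfolding ideal_gen_def by auto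
  then have "c * x = (\<Sum>s\<in>F. (c * d s) * s)" by (simp add: sum_distrib_left mult.assoc)
  with F show ?thesis unfolding ideal_gen_def by (auto intro!: exI[of _ F] exI[of _ "\<lambda>s. c * d s"])
qed

lemma ideal_gen_add: "x \<in> ideal_gen S \<Longrightarrow> y \<in> ideal_gen S \<Longrightarrow> x + y \<in> ideal_gen S"
proof -
  assume "x \<in> ideal_gen S" "y \<in> ideal_gen S"
  then obtain F d G e where F: "finite F" "F \<subseteq> S" "x = (\<Sum>s\<in>F. d s * s)"
    and G: "finite G" "G \<subseteq> S" "y = (\<Sum>s\<in>G. e s * s)" unfolding ideal_gen_def by auto
  define c where "c s = (if s \<in> F then d s else 0) + (if s \<in> G then e s else 0)" for s
  have 1: "(\<Sum>s\<in>F \<union> G. (if s \<in> F then d s else 0) * s) = x"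
    unfolding F(3) by (rule sum.mono_neutral_cong_right) (use F G in auto)
  have 2: "(\<Sum>s\<in>F \<union> G. (if s \<in> G then e s else 0) * s) = y"
    unfolding G(3) by (rule sum.mono_neutral_cong_right) (use F G in auto)
  have "x + y = (\<Sum>s\<in>F \<union> G. c s * s)"
    unfolding c_def distrib_right sum.distrib 1 2 ..
  with F G show ?thesis unfolding ideal_gen_def by (auto intro!: exI[of _ "F \<union> G"] exI[of _ c])
qed

lemma ideal_gen_sum: "finite F \<Longrightarrow> (\<And>x. x \<in> F \<Longrightarrow> g x \<in> ideal_gen S) \<Longrightarrow> sum g F \<in> ideal_gen S"
  by (induction F rule: finite_induct) (auto intro: ideal_gen_0 ideal_gen_add)

lemma ideal_gen_subset: "S \<subseteq> ideal_gen T \<Longrightarrow> ideal_gen S \<subseteq> ideal_gen T"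
  unfolding ideal_gen_def[of S]
  by (auto intro!: ideal_gen_sum ideal_gen_mult)

lemma ideal_prod_gen:
  assumes "\<And>s t. s \<in> A \<Longrightarrow> t \<in> B \<Longrightarrow> s * t \<in> ideal_gen T"
  shows "ideal_prod (ideal_gen A) (ideal_gen B) \<subseteq> ideal_gen T"
  unfolding ideal_prod_def
proof (rule ideal_gen_subset, safe)
  fix x y assume "x \<in> ideal_gen A" "y \<in> ideal_gen B"
  then obtain F d G e where F: "finite F" "F \<subseteq> A" "x = (\<Sum>s\<in>F. d s * s)"
    and G: "finite G" "G \<subseteq> B" "y = (\<Sum>s\<in>G. e s * s)" unfolding ideal_gen_def by auto
  have "x * y = (\<Sum>s\<in>F. \<Sum>t\<in>G. (d s * e t) * (s * t))"
    unfolding F(3) G(3) sum_product by (simp only: mult_ac)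
  also have "\<dots> \<in> ideal_gen T"
    by (intro ideal_gen_sum ideal_gen_mult assms) (use F G in auto)
  finally show "x * y \<in> ideal_gen T" .
qed

theorem lemma6p4:
  fixes n :: nat and a :: "nat \<Rightarrow> nat" and J K :: "nat set" and i :: nat
  assumes "J \<subseteq> {1..n}" and "K \<subseteq> {1..n}" and "i \<in> J \<inter> K"
  shows "ideal_prod (Lmarg n a (K - {i})) (Lmarg n a J)
    \<subseteq> ideal_sum (PDeltaR n a (complex2 J K) :: (nat \<Rightarrow> nat, 'k::field) mpoly set)
                 (Lmarg n a (J - {i}))"
proof -
  have iN: "i \<in> {1..n}" "i \<in> J" "i \<in> K" using assms by auto
  let ?T = "PDeltaR n a (complex2 J K) \<union> (Lmarg n a (J - {i}) :: (nat \<Rightarrow> nat, 'k::field) mpoly set)"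
  have key: "xsig n a \<sigma> * xsig n a \<tau> \<in> ideal_gen ?T"
    if s1: "\<sigma> \<in> margin_idx n a" and s2: "msupp n \<sigma> = (K - {i}) \<inter> {1..n}"
      and s3: "\<forall>j\<in>(K - {i}) \<inter> {1..n}. 1 \<le> \<sigma> j"
      and t1: "\<tau> \<in> margin_idx n a" and t2: "msupp n \<tau> = J \<inter> {1..n}"
      and t3: "\<forall>j\<in>J \<inter> {1..n}. 1 \<le> \<tau> j" for \<sigma> \<tau>
  proof -
    define \<sigma>' where "\<sigma>' = \<sigma>(i := \<tau> i)"
    define \<tau>' where "\<tau>' = \<tau>(i := 0)"
    have sp0: "\<sigma> j \<noteq> 0 \<longleftrightarrow> j \<in> K - {i}" if "j \<in> {1..n}" for j
    proof -
      have "j \<in> msupp n \<sigma> \<longleftrightarrow> \<sigma> j \<noteq> 0" using that unfolding msupp_def by simp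
      from this[unfolded s2] show ?thesis using that by simp
    qed
    have sp: "\<forall>j\<in>{1..n}. \<sigma> j \<noteq> 0 \<longleftrightarrow> j \<in> K - {i}"
      using sp0 by blast
    have tp0: "\<tau> j \<noteq> 0 \<longleftrightarrow> j \<in> J" if "j \<in> {1..n}" for j
    proof -
      have "j \<in> msupp n \<tau> \<longleftrightarrow> \<tau> j \<noteq> 0" using that unfolding msupp_def by simp
      from this[unfolded t2] show ?thesis using that by simp
    qed
    have tp: "\<forall>j\<in>{1..n}. \<tau> j \<noteq> 0 \<longleftrightarrow> j \<in> J"
      using tp0 by blast
    have si: "\<sigma> i = 0" using sp iN by auto
    have ti: "1 \<le> \<tau> i" "\<tau> i \<le> a i" using t3 t1 iN unfolding margin_idx_def by auto
    have s'm: "\<sigma>' \<in> margin_idx n a" using s1 ti iN unfolding margin_idx_def \<sigma>'_def by auto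
    have t'm: "\<tau>' \<in> margin_idx n a" using t1 unfolding margin_idx_def \<tau>'_def by auto
    have sv: "\<sigma> \<in> Svars n a (complex2 J K)" using s1 sp
      unfolding Svars_def complex2_def msupp_def by auto
    have tv: "\<tau> \<in> Svars n a (complex2 J K)" using t1 tp
      unfolding Svars_def complex2_def msupp_def by auto
    have s'v: "\<sigma>' \<in> Svars n a (complex2 J K)" using s'm sp iN
      unfolding Svars_def complex2_def msupp_def \<sigma>'_def by auto
    have t'v: "\<tau>' \<in> Svars n a (complex2 J K)" using t'm tp
      unfolding Svars_def complex2_def msupp_def \<tau>'_def by auto
    define p where "p = (PVar \<sigma> * PVar \<tau> - PVar \<sigma>' * PVar \<tau>' :: (nat \<Rightarrow> nat, 'k) mpoly)"
    have pv: "pvars p \<subseteq> Svars n a (complex2 J K)"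
      using pvars_diff[of "PVar \<sigma> * PVar \<tau> :: (nat \<Rightarrow> nat, 'k) mpoly" "PVar \<sigma>' * PVar \<tau>'"]
        sv tv s'v t'v unfolding p_def pvars_PVar2 by auto
    define g where "g s = (\<Prod>j\<in>{1..n}. yvar a j (s j) :: (nat \<times> nat, 'k) mpoly)" for s
    have gr: "g s = yvar a i (s i) * (\<Prod>j\<in>{1..n} - {i}. yvar a j (s j))" for s
      unfolding g_def using iN by (simp add: prod.remove)
    have c1: "(\<Prod>j\<in>{1..n} - {i}. yvar a j (\<sigma>' j) :: (nat \<times> nat, 'k) mpoly) = (\<Prod>j\<in>{1..n} - {i}. yvar a j (\<sigma> j))"
      by (rule prod.cong) (auto simp: \<sigma>'_def)
    have c2: "(\<Prod>j\<in>{1..n} - {i}. yvar a j (\<tau>' j) :: (nat \<times> nat, 'k) mpoly) = (\<Prod>j\<in>{1..n} - {i}. yvar a j (\<tau> j))"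
      by (rule prod.cong) (auto simp: \<tau>'_def)
    have "sigD n a p = g \<sigma> * g \<tau> - g \<sigma>' * g \<tau>'"
      unfolding p_def sigD_def psubst_diff psubst_PVar2 g_def ..
    also have "\<dots> = 0"
      unfolding gr c1 c2 by (simp add: \<sigma>'_def \<tau>'_def si mult_ac)
    finally have "p \<in> PDelta n a (complex2 J K)" using pv unfolding PDelta_def by auto
    then have pin: "tauD n a p \<in> ideal_gen ?T"
      unfolding PDeltaR_def by (intro ideal_gen_base) (auto intro: ideal_gen_base)
    have tauDp: "tauD n a p = xsig n a \<sigma> * xsig n a \<tau> - xsig n a \<sigma>' * xsig n a \<tau>'"
      unfolding p_def tauD_def psubst_diff psubst_PVar2 ..
    have "xsig n a \<tau>' \<in> (Lmarg n a (J - {i}) :: (nat \<Rightarrow> nat, 'k) mpoly set)"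
      unfolding Lmarg_def
    proof (intro ideal_gen_base imageI CollectI conjI)
      show "\<tau>' \<in> margin_idx n a" by (fact t'm)
      show "msupp n \<tau>' = (J - {i}) \<inter> {1..n}" using tp unfolding msupp_def \<tau>'_def by auto
      show "\<forall>j\<in>(J - {i}) \<inter> {1..n}. 1 \<le> \<tau>' j" using t3 unfolding \<tau>'_def by auto
    qed
    then have "xsig n a \<sigma>' * xsig n a \<tau>' \<in> ideal_gen ?T"
      by (intro ideal_gen_mult ideal_gen_base) auto
    then have "tauD n a p + xsig n a \<sigma>' * xsig n a \<tau>' \<in> ideal_gen ?T"
      using pin by (rule ideal_gen_add[rotated])
    then show ?thesis unfolding tauDp by simp
  qed
  show ?thesis
    unfolding ideal_sum_def Lmarg_def[of n a "K - {i}"] Lmarg_def[of n a J]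
  proof (rule ideal_prod_gen)
    fix s t :: "(nat \<Rightarrow> nat, 'k) mpoly" assume "s \<in> xsig n a ` {s \<in> margin_idx n a. msupp n s = (K - {i}) \<inter> {1..n} \<and> (\<forall>j\<in>(K - {i}) \<inter> {1..n}. 1 \<le> s j)}"
      "t \<in> xsig n a ` {s \<in> margin_idx n a. msupp n s = J \<inter> {1..n} \<and> (\<forall>j\<in>J \<inter> {1..n}. 1 \<le> s j)}"
    then obtain \<sigma> \<tau> where "s = xsig n a \<sigma>" "t = xsig n a \<tau>"
      "\<sigma> \<in> margin_idx n a" "msupp n \<sigma> = (K - {i}) \<inter> {1..n}" "\<forall>j\<in>(K - {i}) \<inter> {1..n}. 1 \<le> \<sigma> j"
      "\<tau> \<in> margin_idx n a" "msupp n \<tau> = J \<inter> {1..n}" "\<forall>j\<in>J \<inter> {1..n}. 1 \<le> \<tau> j"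
      by blast
    then show "s * t \<in> ideal_gen ?T" using key by presburger
  qed
qed

end
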